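(* Let $n,r$ be integers with $n\ge r+2\ge 4$, and let $h(U_{n,r})$ be the number of pairwise different (i.e. pairwise non-equivalent) hyperplane splits of $P(U_{n,r})$. Then $h(U_{n,r})\ge \lfloor n/2\rfloor-1$.
   Context: $U_{n,r}$ is the uniform matroid on $\{1,\dots,n\}$ whose bases are all $r$-subsets. For a matroid $N$ on $\{1,\dots,n\}$, $P(N)=\mathrm{conv}\{\sum_{i\in B}e_i : B \text{ a base of } N\}\subset\mathbb{R}^n$. A hyperplane split of $P(N)$ is an expression $P(N)=P(N_1)\cup P(N_2)$ with $N_1,N_2$ matroids on the same ground set such that $P(N_1)\cap P(N_2)$ is a face of both $P(N_1)$ and $P(N_2)$, and $P(N_1),P(N_2)\neq P(N)$. Two hyperplane splits $P(N_1)\cup P(N_2)$ and $P(N_1')\cup P(N_2')$ are equivalent if $P(N_i)$ and $P(N_i')$ are combinatorially equivalent (have isomorphic face lattices) for each $i=1,2$, and different otherwise. *)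

theory Defs
  imports "HOL-Analysis.Analysis"
begin

text \<open>Matroids on the finite ground set UNIV :: 'n set (with CARD('n) = n),
  given by their set of bases (basis axioms).\<close>
definition matroid_bases :: "'n::finite set set \<Rightarrow> bool" where
  "matroid_bases \<B> \<longleftrightarrow> \<B> \<noteq> {} \<and>
     (\<forall>B1\<in>\<B>. \<forall>B2\<in>\<B>. \<forall>x\<in>B1 - B2. \<exists>y\<in>B2 - B1. insert y (B1 - {x}) \<in> \<B>)"

definition uniform_matroid :: "nat \<Rightarrow> 'n::finite set set" where
  "uniform_matroid r = {B. card B = r}"

definition incidence_vec :: "'n::finite set \<Rightarrow> real ^ 'n" where
  "incidence_vec B = (\<chi> i. if i \<in> B then 1 else 0)"

definition base_polytope :: "'n::finite set set \<Rightarrow> (real ^ 'n) set" where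
  "base_polytope \<B> = convex hull (incidence_vec ` \<B>)"

definition comb_equiv :: "(real ^ 'n::finite) set \<Rightarrow> (real ^ 'n) set \<Rightarrow> bool" where
  "comb_equiv P Q \<longleftrightarrow> (\<exists>f. bij_betw f {F. F face_of P} {G. G face_of Q} \<and>
     (\<forall>F1 F2. F1 face_of P \<longrightarrow> F2 face_of P \<longrightarrow> (F1 \<subseteq> F2 \<longleftrightarrow> f F1 \<subseteq> f F2)))"

definition hyperplane_split :: "'n::finite set set \<Rightarrow> 'n set set \<Rightarrow> 'n set set \<Rightarrow> bool" where
  "hyperplane_split N N1 N2 \<longleftrightarrow> matroid_bases N1 \<and> matroid_bases N2 \<and>
     base_polytope N = base_polytope N1 \<union> base_polytope N2 \<and>
     (base_polytope N1 \<inter> base_polytope N2) face_of base_polytope N1 \<and>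
     (base_polytope N1 \<inter> base_polytope N2) face_of base_polytope N2 \<and>
     base_polytope N1 \<noteq> base_polytope N \<and> base_polytope N2 \<noteq> base_polytope N"

definition split_equiv :: "('n::finite set set \<times> 'n set set) rel" where
  "split_equiv = {((N1, N2), (N1', N2')).
     comb_equiv (base_polytope N1) (base_polytope N1') \<and>
     comb_equiv (base_polytope N2) (base_polytope N2')}"

definition num_splits :: "'n::finite set set \<Rightarrow> nat" where
  "num_splits N = card ({(N1, N2). hyperplane_split N N1 N2} // split_equiv)"

end

theory Submission
  imports Defs
begin

lemma inc_inner: "incidence_vec A \<bullet> (x::real^'n::finite) = (\<Sum>i\<in>A. x$i)"
proof -
  have "incidence_vec A \<bullet> x = (\<Sum>i\<in>UNIV. if i \<in> A then x$i else 0)"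
    unfolding incidence_vec_def inner_vec_def by (rule sum.cong) auto
  also have "\<dots> = (\<Sum>i\<in>A. x$i)" by (simp add: sum.If_cases)
  finally show ?thesis .
qed

lemma inc_inner2: "incidence_vec A \<bullet> incidence_vec (B::'n::finite set) = real (card (A \<inter> B))"
  unfolding inc_inner by (simp add: incidence_vec_def sum.If_cases)

lemma inc_inj: "incidence_vec A = incidence_vec B \<Longrightarrow> A = B"
  unfolding incidence_vec_def by (auto simp: vec_eq_iff split: if_splits)

lemma inj_inc: "inj incidence_vec" using inc_inj by (meson injI)

lemma conv4:
  fixes C :: "'a::real_vector set"
  assumes "convex C" "p1 \<in> C" "p2 \<in> C" "p3 \<in> C" "p4 \<in> C"
    "c1 \<ge> 0" "c2 \<ge> 0" "c3 \<ge> 0" "c4 \<ge> 0" "c1 + c2 + c3 + c4 = 1"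
  shows "c1 *\<^sub>R p1 + c2 *\<^sub>R p2 + c3 *\<^sub>R p3 + c4 *\<^sub>R p4 \<in> C"
proof -
  define c where "c i = (if i = (1::nat) then c1 else if i = 2 then c2 else if i = 3 then c3 else c4)" for i
  define p where "p i = (if i = (1::nat) then p1 else if i = 2 then p2 else if i = 3 then p3 else p4)" for i
  have "(\<Sum>i\<in>{1,2,3,4}. c i *\<^sub>R p i) \<in> C"
    apply (rule convex_sum[OF _ assms(1)])
    using assms by (auto simp: c_def p_def)
  then show ?thesis by (simp add: c_def p_def add.assoc)
qed

definition lvset :: "nat \<Rightarrow> 'n::finite set \<Rightarrow> nat \<Rightarrow> nat \<Rightarrow> 'n set set" where
  "lvset r A q p = {B. card B = r \<and> q \<le> card (B \<inter> A) \<and> card (B \<inter> A) \<le> p}"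

lemma exchange:
  fixes B B' A :: "'n::finite set"
  assumes "card B = r" "card B' = r" "card (B \<inter> A) = p" "card (B' \<inter> A) = q" "q < p"
  shows "\<exists>C C'. card C = r \<and> card C' = r \<and> card (C \<inter> A) = p - 1 \<and> card (C' \<inter> A) = q + 1
     \<and> incidence_vec B + incidence_vec B' = incidence_vec C + incidence_vec C'"
proof -
  have "\<not> B \<inter> A \<subseteq> B' \<inter> A"
    using assms card_mono[of "B' \<inter> A" "B \<inter> A"] by auto
  then obtain a where a: "a \<in> B" "a \<in> A" "a \<notin> B'" by auto
  have cB: "card (B - A) = r - p" using assms card_Diff_subset_Int[of B A] by simp
  have cB': "card (B' - A) = r - q" using assms card_Diff_subset_Int[of B' A] by simp
  have "p \<le> r" using assms card_mono[of B "B \<inter> A"] by auto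
  hence "\<not> B' - A \<subseteq> B - A"
    using assms cB cB' card_mono[of "B - A" "B' - A"] by auto
  then obtain b where b: "b \<in> B'" "b \<notin> A" "b \<notin> B" by auto
  define C where "C = insert b (B - {a})"
  define C' where "C' = insert a (B' - {b})"
  have "r \<ge> 1" using a assms card_gt_0_iff[of B] by auto
  have "card C = r" unfolding C_def using a b assms \<open>r \<ge> 1\<close> by (simp add: card.insert_remove)
  moreover have "card C' = r" unfolding C'_def using a b assms \<open>r \<ge> 1\<close> by (simp add: card.insert_remove)
  moreover have "C \<inter> A = (B \<inter> A) - {a}" unfolding C_def using b by auto
  hence "card (C \<inter> A) = p - 1" using a assms by simp
  moreover have "C' \<inter> A = insert a (B' \<inter> A)" unfolding C'_def using a b by auto
  hence "card (C' \<inter> A) = q + 1" using a assms by simp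
  moreover have "incidence_vec B + incidence_vec B' = incidence_vec C + incidence_vec C'"
    unfolding incidence_vec_def C_def C'_def vec_eq_iff using a b by auto
  ultimately show ?thesis by blast
qed

lemma minkowski:
  fixes A :: "'n::finite set"
  assumes "q < p"
  shows "convex hull (incidence_vec ` lvset r A p p) + convex hull (incidence_vec ` lvset r A q q)
    \<subseteq> convex hull (incidence_vec ` lvset r A (p-1) (p-1)) + convex hull (incidence_vec ` lvset r A (q+1) (q+1))"
proof -
  have "incidence_vec ` lvset r A p p + incidence_vec ` lvset r A q q
     \<subseteq> incidence_vec ` lvset r A (p-1) (p-1) + incidence_vec ` lvset r A (q+1) (q+1)"
  proof
    fix x assume "x \<in> incidence_vec ` lvset r A p p + incidence_vec ` lvset r A q q"
    then obtain B B' where BB: "B \<in> lvset r A p p" "B' \<in> lvset r A q q" "x = incidence_vec B + incidence_vec B'"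
      by (auto simp: set_plus_def)
    then obtain C C' where CC: "card C = r \<and> card C' = r \<and> card (C \<inter> A) = p - 1 \<and> card (C' \<inter> A) = q + 1
     \<and> incidence_vec B + incidence_vec B' = incidence_vec C + incidence_vec C'"
      using exchange[of B r B' A p q] assms by (auto simp: lvset_def)
    then show "x \<in> incidence_vec ` lvset r A (p-1) (p-1) + incidence_vec ` lvset r A (q+1) (q+1)"
      unfolding BB(3) CC[THEN conjunct2, THEN conjunct2, THEN conjunct2, THEN conjunct2]
      using BB CC by (intro set_plus_intro imageI) (auto simp: lvset_def)
  qed
  then show ?thesis by (metis convex_hull_set_plus hull_mono)
qed

lemma hull_un_conv: "convex hull (S \<union> T) = convex hull (convex hull S \<union> convex hull (T::'a::real_vector set))"
proof (rule antisym)
  show "convex hull (S \<union> T) \<subseteq> convex hull (convex hull S \<union> convex hull T)"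
    by (intro hull_mono) (meson Un_mono hull_subset)
  show "convex hull (convex hull S \<union> convex hull T) \<subseteq> convex hull (S \<union> T)"
    by (intro hull_minimal) (auto intro: hull_mono[THEN subsetD] simp: convex_convex_hull)
qed

lemma lvset_mono: "q' \<le> q \<Longrightarrow> p \<le> p' \<Longrightarrow> lvset r A q p \<subseteq> lvset r A q' p'"
  by (auto simp: lvset_def)

lemma hull_lv_mono: "q' \<le> q \<Longrightarrow> p \<le> p' \<Longrightarrow> convex hull (incidence_vec ` lvset r A q p) \<subseteq> convex hull (incidence_vec ` lvset r A q' p')"
  by (intro hull_mono image_mono lvset_mono)

lemma split_levels:
  fixes A :: "'n::finite set"
  assumes "q + 2 \<le> p"
  shows "convex hull (incidence_vec ` lvset r A q p) \<subseteq>
     convex hull (incidence_vec ` lvset r A (q+1) p) \<union> convex hull (incidence_vec ` lvset r A q (p-1))"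
proof (cases "lvset r A p p = {} \<or> lvset r A q q = {}")
  case True
  then have "lvset r A q p \<subseteq> lvset r A (q+1) p \<or> lvset r A q p \<subseteq> lvset r A q (p-1)"
  proof
    assume emp: "lvset r A p p = {}"
    have "B \<in> lvset r A q (p-1)" if "B \<in> lvset r A q p" for B
    proof -
      have "card (B \<inter> A) \<noteq> p" using emp that by (auto simp: lvset_def)
      then show ?thesis using that by (auto simp: lvset_def)
    qed
    then show ?thesis by blast
  next
    assume emp: "lvset r A q q = {}"
    have "B \<in> lvset r A (q+1) p" if "B \<in> lvset r A q p" for B
    proof -
      have "card (B \<inter> A) \<noteq> q" using emp that by (auto simp: lvset_def)
      then show ?thesis using that by (auto simp: lvset_def)
    qed
    then show ?thesis by blast
  qed
  then show ?thesis by (metis hull_mono image_mono le_supI1 le_supI2)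
next
  case False
  let ?X = "incidence_vec ` lvset r A p p"
  let ?Y = "incidence_vec ` lvset r A q q"
  let ?Z = "incidence_vec ` lvset r A (q+1) (p-1)"
  let ?R1 = "convex hull (incidence_vec ` lvset r A (q+1) p)"
  let ?R2 = "convex hull (incidence_vec ` lvset r A q (p-1))"
  from False obtain B B' where B: "B \<in> lvset r A p p" and B': "B' \<in> lvset r A q q" by auto
  then obtain C C' where "card C = r" "card (C \<inter> A) = p - 1"
    using exchange[of B r B' A p q] assms by (auto simp: lvset_def)
  then have "C \<in> lvset r A (q+1) (p-1)" using assms by (auto simp: lvset_def)
  hence Zne: "?Z \<noteq> {}" by auto
  have eq: "lvset r A q p = lvset r A p p \<union> (lvset r A q q \<union> lvset r A (q+1) (p-1))"
    using assms by (auto simp: lvset_def)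
  have le: "q \<le> p - 1" "q + 1 \<le> p - 1" "p - 1 \<le> p" "q \<le> q+1" "q+1 \<le> p" using assms by auto
  show ?thesis
  proof
    fix x assume "x \<in> convex hull (incidence_vec ` lvset r A q p)"
    hence "x \<in> convex hull (convex hull ?X \<union> convex hull (?Y \<union> ?Z))"
      unfolding eq image_Un by (metis hull_un_conv)
    then obtain a b y w where ab: "a \<ge> 0" "b \<ge> 0" "a + b = 1" and y: "y \<in> convex hull ?X"
       and w: "w \<in> convex hull (?Y \<union> ?Z)" and x: "x = a *\<^sub>R y + b *\<^sub>R w"
      using convex_hull_union_two[of "convex hull ?X" "convex hull (?Y \<union> ?Z)"] False
      by (auto simp: convex_convex_hull)
    from w have "w \<in> convex hull (convex hull ?Y \<union> convex hull ?Z)" by (metis hull_un_conv)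
    then obtain c d z m where cd: "c \<ge> 0" "d \<ge> 0" "c + d = 1" and z: "z \<in> convex hull ?Y"
       and m: "m \<in> convex hull ?Z" and w: "w = c *\<^sub>R z + d *\<^sub>R m"
      using convex_hull_union_two[of "convex hull ?Y" "convex hull ?Z"] False Zne
      by (auto simp: convex_convex_hull)
    have "y + z \<in> convex hull (incidence_vec ` lvset r A (p-1) (p-1)) + convex hull (incidence_vec ` lvset r A (q+1) (q+1))"
      using minkowski[of q p r A] assms y z by (auto intro: set_plus_intro)
    then obtain u v where u: "u \<in> convex hull (incidence_vec ` lvset r A (p-1) (p-1))"
      and v: "v \<in> convex hull (incidence_vec ` lvset r A (q+1) (q+1))" and yz: "y + z = u + v"
      by (auto simp: set_plus_def)
    show "x \<in> ?R1 \<union> ?R2"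
    proof (cases "a \<le> b * c")
      case True
      have "x = a *\<^sub>R u + a *\<^sub>R v + (b*c - a) *\<^sub>R z + (b*d) *\<^sub>R m"
      proof -
        have e: "a *\<^sub>R u + a *\<^sub>R v = a *\<^sub>R y + a *\<^sub>R z" using yz by (metis scaleR_right_distrib)
        show ?thesis unfolding x w using e by (simp add: algebra_simps)
      qed
      moreover have "x \<in> ?R2" unfolding calculation
        apply (rule conv4[OF convex_convex_hull])
        subgoal using u assms hull_lv_mono[of q "p-1" "p-1" "p-1" r A] le by (meson order_refl subsetD)
        subgoal using v assms hull_lv_mono[of q "q+1" "q+1" "p-1" r A] le by (meson order_refl subsetD)
        subgoal using z assms hull_lv_mono[of q q q "p-1" r A] le by (meson order_refl subsetD)
        subgoal using m assms hull_lv_mono[of q "q+1" "p-1" "p-1" r A] le by (meson order_refl subsetD)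
        subgoal using ab by simp
        subgoal using ab by simp
        subgoal using True by simp
        subgoal using ab cd by simp
        subgoal using ab cd by (simp add: algebra_simps) (metis distrib_left mult.right_neutral)
        done
      ultimately show ?thesis by blast
    next
      case False
      have "x = (b*c) *\<^sub>R u + (b*c) *\<^sub>R v + (a - b*c) *\<^sub>R y + (b*d) *\<^sub>R m"
      proof -
        have e: "(b*c) *\<^sub>R u + (b*c) *\<^sub>R v = (b*c) *\<^sub>R y + (b*c) *\<^sub>R z" using yz by (metis scaleR_right_distrib)
        show ?thesis unfolding x w using e by (simp add: algebra_simps)
      qed
      moreover have "x \<in> ?R1" unfolding calculation
        apply (rule conv4[OF convex_convex_hull])
        subgoal using u assms hull_lv_mono[of "q+1" "p-1" "p-1" p r A] le by (meson order_refl subsetD)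
        subgoal using v assms hull_lv_mono[of "q+1" "q+1" "q+1" p r A] le by (meson order_refl subsetD)
        subgoal using y assms hull_lv_mono[of "q+1" p p p r A] le by (meson order_refl subsetD)
        subgoal using m assms hull_lv_mono[of "q+1" "q+1" "p-1" p r A] le by (meson order_refl subsetD)
        subgoal using ab cd by simp
        subgoal using ab cd by simp
        subgoal using False by simp
        subgoal using ab cd by simp
        subgoal using ab cd by (simp add: algebra_simps) (metis distrib_left mult.right_neutral)
        done
      ultimately show ?thesis by blast
    qed
  qed
qed

lemma lv_inner: "incidence_vec A \<bullet> incidence_vec B = real (card (B \<inter> A))"
  by (simp add: inc_inner2 Int_commute)

lemma hull_ge: "convex hull (incidence_vec ` lvset r A q p) \<subseteq> {x. incidence_vec A \<bullet> x \<ge> real q}"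
  by (rule hull_minimal) (auto simp: lvset_def lv_inner convex_halfspace_ge)

lemma hull_le: "convex hull (incidence_vec ` lvset r A q p) \<subseteq> {x. incidence_vec A \<bullet> x \<le> real p}"
  by (rule hull_minimal) (auto simp: lvset_def lv_inner convex_halfspace_le)

lemma face_step:
  fixes A :: "'n::finite set"
  assumes x: "x \<in> convex hull (incidence_vec ` lvset r A m (m+1))" and le: "incidence_vec A \<bullet> x \<le> real m"
  shows "x \<in> convex hull (incidence_vec ` lvset r A m m)"
proof -
  let ?S = "incidence_vec ` lvset r A m (m+1)"
  have fin: "finite ?S" by simp
  have F: "(convex hull ?S \<inter> {y. incidence_vec A \<bullet> y = real m}) face_of convex hull ?S"
    by (rule face_of_Int_supporting_hyperplane_ge) (use hull_ge[of r A m "m+1"] in \<open>auto simp: convex_convex_hull\<close>)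
  obtain S' where S': "S' \<subseteq> ?S" "convex hull ?S \<inter> {y. incidence_vec A \<bullet> y = real m} = convex hull S'"
    using face_of_convex_hull_subset[OF finite_imp_compact[OF fin] F] by blast
  have "S' \<subseteq> incidence_vec ` lvset r A m m"
  proof
    fix s assume s: "s \<in> S'"
    then have "s \<in> convex hull S'" by (simp add: hull_inc)
    then have "incidence_vec A \<bullet> s = real m" using S'(2) by blast
    moreover obtain B where "B \<in> lvset r A m (m+1)" "s = incidence_vec B" using s S'(1) by blast
    ultimately show "s \<in> incidence_vec ` lvset r A m m" by (auto simp: lvset_def lv_inner)
  qed
  moreover have "x \<in> convex hull S'"
    using S'(2) x le hull_ge[of r A m "m+1"] by fastforce
  ultimately show ?thesis by (meson hull_mono subsetD)
qed

lemma main_levels: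
  fixes A :: "'n::finite set"
  shows "x \<in> convex hull (incidence_vec ` lvset r A q p) \<Longrightarrow> incidence_vec A \<bullet> x \<le> real m
     \<Longrightarrow> x \<in> convex hull (incidence_vec ` lvset r A 0 m)"
proof (induction "p - q" arbitrary: q p rule: less_induct)
  case less
  show ?case
  proof (cases "p \<le> m")
    case True
    then show ?thesis using less.prems hull_lv_mono[of 0 q p m r A] by auto
  next
    case pm: False
    show ?thesis
    proof (cases "q + 2 \<le> p")
      case True
      from split_levels[OF True, of r A] less.prems(1)
      have "x \<in> convex hull (incidence_vec ` lvset r A (q+1) p) \<or> x \<in> convex hull (incidence_vec ` lvset r A q (p-1))"
        by blast
      then show ?thesis
      proof
        assume "x \<in> convex hull (incidence_vec ` lvset r A (q+1) p)"
        then show ?thesis using less.hyps[of p "q+1"] True less.prems(2) by auto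
      next
        assume "x \<in> convex hull (incidence_vec ` lvset r A q (p-1))"
        then show ?thesis using less.hyps[of "p-1" q] True less.prems(2) by auto
      qed
    next
      case False
      have "real q \<le> incidence_vec A \<bullet> x" using hull_ge[of r A q p] less.prems(1) by auto
      then have "q \<le> m" using less.prems(2) by linarith
      then have qm: "q = m" "p = m + 1" using False pm by auto
      show ?thesis using face_step[of x r A m] less.prems qm hull_lv_mono[of 0 m m m r A] by auto
    qed
  qed
qed

lemma uniform_lv: "uniform_matroid r = lvset r (A::'n::finite set) 0 r"
  unfolding uniform_matroid_def lvset_def
  by (auto intro: card_mono)

lemma P1_lemma:
  fixes A :: "'n::finite set"
  assumes "x \<in> base_polytope (uniform_matroid r :: 'n set set)" "incidence_vec A \<bullet> x \<le> real m"
  shows "x \<in> base_polytope {B. card B = r \<and> card (B \<inter> A) \<le> m}"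
proof -
  have "{B. card B = r \<and> card (B \<inter> A) \<le> m} = lvset r A 0 m" by (auto simp: lvset_def)
  then show ?thesis using main_levels[of x r A 0 r m] assms
    unfolding base_polytope_def uniform_lv[of r A] by simp
qed

lemma sum_coords:
  assumes "x \<in> base_polytope (uniform_matroid r :: 'n::finite set set)"
  shows "incidence_vec (UNIV::'n set) \<bullet> x = real r"
proof -
  have "base_polytope (uniform_matroid r :: 'n set set) \<subseteq> {y. incidence_vec (UNIV::'n set) \<bullet> y = real r}"
    unfolding base_polytope_def
    by (rule hull_minimal) (auto simp: uniform_matroid_def inc_inner2 convex_hyperplane)
  then show ?thesis using assms by auto
qed

lemma inc_compl: "incidence_vec (- A) = incidence_vec (UNIV::'n::finite set) - incidence_vec A"
  by (auto simp: incidence_vec_def vec_eq_iff)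

lemma card_compl_lv:
  assumes "card B = r" shows "card (B \<inter> - A) = r - card (B \<inter> (A::'n::finite set))"
proof -
  have "B \<inter> - A = B - A" by auto
  then show ?thesis using assms card_Diff_subset_Int[of B A] by simp
qed

lemma P2_lemma:
  fixes A :: "'n::finite set"
  assumes "x \<in> base_polytope (uniform_matroid r :: 'n set set)" "incidence_vec A \<bullet> x \<ge> real m" "m \<le> r"
  shows "x \<in> base_polytope {B. card B = r \<and> m \<le> card (B \<inter> A)}"
proof -
  have "incidence_vec (- A) \<bullet> x = real r - incidence_vec A \<bullet> x"
    using sum_coords[OF assms(1)] by (simp add: inc_compl inner_diff_left)
  then have "incidence_vec (- A) \<bullet> x \<le> real (r - m)" using assms by simp
  from P1_lemma[OF assms(1) this]
  have "x \<in> base_polytope {B. card B = r \<and> card (B \<inter> - A) \<le> r - m}" .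
  moreover have "{B. card B = r \<and> card (B \<inter> - A) \<le> r - m} = {B. card B = r \<and> m \<le> card (B \<inter> A)}"
  proof -
    have "card (B \<inter> A) \<le> r" if "card B = r" for B :: "'n set" using that by (metis card_mono finite inf_le1)
    then show ?thesis using card_compl_lv[of _ r A] assms(3) by fastforce
  qed
  ultimately show ?thesis by simp
qed

lemma mb1:
  fixes A :: "'n::finite set"
  assumes ne: "{B. card B = r \<and> card (B \<inter> A) \<le> k} \<noteq> {}"
  shows "matroid_bases {B. card B = r \<and> card (B \<inter> A) \<le> k}"
  unfolding matroid_bases_def
proof (intro conjI ballI ne)
  fix B1 B2 x
  assume B1: "B1 \<in> {B. card B = r \<and> card (B \<inter> A) \<le> k}" and B2: "B2 \<in> {B. card B = r \<and> card (B \<inter> A) \<le> k}"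
    and x: "x \<in> B1 - B2"
  have c1: "card B1 = r" "card (B1 \<inter> A) \<le> k" using B1 by auto
  have c2: "card B2 = r" "card (B2 \<inter> A) \<le> k" using B2 by auto
  have d: "card (B2 - B1) = card (B1 - B2)"
    using card_Diff_subset_Int[of B2 B1] card_Diff_subset_Int[of B1 B2] c1 c2 by (simp add: Int_commute)
  have "card (B1 - B2) \<ge> 1" using x card_gt_0_iff[of "B1 - B2"] by auto
  then have "B2 - B1 \<noteq> {}" using d by (metis card.empty not_one_le_zero)
  have r1: "r \<ge> 1" using x c1 card_gt_0_iff[of B1] by auto
  have cardC: "card (insert y (B1 - {x})) = r" if "y \<in> B2 - B1" for y
    using that x c1 r1 by (simp add: card.insert_remove)
  have incl: "insert y (B1 - {x}) \<inter> A \<subseteq> insert y (B1 \<inter> A - {x})" for y by auto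
  have incl2: "insert y (B1 - {x}) \<inter> A \<subseteq> insert y (B1 \<inter> A)" for y by auto
  show "\<exists>y\<in>B2 - B1. insert y (B1 - {x}) \<in> {B. card B = r \<and> card (B \<inter> A) \<le> k}"
  proof (cases "x \<in> A")
    case True
    obtain y where y: "y \<in> B2 - B1" using \<open>B2 - B1 \<noteq> {}\<close> by auto
    have "card (insert y (B1 - {x}) \<inter> A) \<le> card (insert y (B1 \<inter> A - {x}))"
      by (rule card_mono[OF _ incl]) simp
    also have "\<dots> \<le> card (B1 \<inter> A - {x}) + 1" by (simp add: card_insert_le_m1 card_insert_if)
    also have "\<dots> = card (B1 \<inter> A)"
    proof -
      have xi: "x \<in> B1 \<inter> A" using True x by auto
      then have "card (B1 \<inter> A) \<ge> 1" using card_gt_0_iff[of "B1 \<inter> A"] by fastforce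
      then show ?thesis using xi by (simp add: card_Diff_singleton)
    qed
    finally have "card (insert y (B1 - {x}) \<inter> A) \<le> k" using c1 by linarith
    then show ?thesis using y cardC by blast
  next
    case xA: False
    show ?thesis
    proof (cases "\<exists>y\<in>B2 - B1. y \<notin> A")
      case True
      then obtain y where y: "y \<in> B2 - B1" "y \<notin> A" by auto
      have "insert y (B1 - {x}) \<inter> A = B1 \<inter> A" using y xA by auto
      then have "card (insert y (B1 - {x}) \<inter> A) \<le> k" using c1 by simp
      then show ?thesis using y cardC by blast
    next
      case False
      then have sub: "B2 - B1 \<subseteq> A" by auto
      obtain y where y: "y \<in> B2 - B1" using \<open>B2 - B1 \<noteq> {}\<close> by auto
      show ?thesis
      proof (cases "card (B1 \<inter> A) < k")
        case True
        have "card (insert y (B1 - {x}) \<inter> A) \<le> card (insert y (B1 \<inter> A))"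
          by (rule card_mono[OF _ incl2]) simp
        also have "\<dots> \<le> card (B1 \<inter> A) + 1" by (simp add: card_insert_if)
        finally have "card (insert y (B1 - {x}) \<inter> A) \<le> k" using True by linarith
        then show ?thesis using y cardC by blast
      next
        case False
        have e1: "card (B2 \<inter> A) = card (B2 \<inter> A \<inter> B1) + card (B2 \<inter> A - B1)"
          by (rule card_Int_Diff) simp
        have "B2 \<inter> A - B1 = B2 - B1" using sub by auto
        have e2: "card (B1 \<inter> A) = card (B1 \<inter> A \<inter> B2) + card (B1 \<inter> A - B2)"
          by (rule card_Int_Diff) simp
        have "B1 \<inter> A - B2 \<subseteq> (B1 - B2) - {x}" using xA by auto
        then have "card (B1 \<inter> A - B2) \<le> card ((B1 - B2) - {x})" by (intro card_mono) auto
        also have "\<dots> = card (B1 - B2) - 1" using x by (simp add: card_Diff_singleton)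
        finally have "card (B1 \<inter> A - B2) \<le> card (B1 - B2) - 1" .
        moreover have "B2 \<inter> A \<inter> B1 = B1 \<inter> A \<inter> B2" by auto
        moreover have "card (B2 \<inter> A) = card (B1 \<inter> A \<inter> B2) + card (B1 - B2)"
          using e1 unfolding \<open>B2 \<inter> A - B1 = B2 - B1\<close> \<open>B2 \<inter> A \<inter> B1 = B1 \<inter> A \<inter> B2\<close> d .
        ultimately have "card (B2 \<inter> A) \<ge> card (B1 \<inter> A) + 1"
          using e2 \<open>card (B1 - B2) \<ge> 1\<close> by arith
        then show ?thesis using False c2 by linarith
      qed
    qed
  qed
qed

lemma N2_eq:
  fixes A :: "'n::finite set"
  assumes "m \<le> r"
  shows "{B. card B = r \<and> card (B \<inter> - A) \<le> r - m} = {B. card B = r \<and> m \<le> card (B \<inter> A)}"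
proof -
  have "card (B \<inter> A) \<le> r" if "card B = r" for B :: "'n set" using that by (metis card_mono finite inf_le1)
  then show ?thesis using card_compl_lv[of _ r A] assms by fastforce
qed

lemma split_ok:
  fixes A :: "'n::finite set"
  assumes hi: "card Bh = r" "card (Bh \<inter> A) > k" and lo: "card Bl = r" "card (Bl \<inter> A) < k"
  shows "hyperplane_split (uniform_matroid r :: 'n set set)
     {B. card B = r \<and> card (B \<inter> A) \<le> k} {B. card B = r \<and> k \<le> card (B \<inter> A)}"
proof -
  let ?N1 = "{B. card B = r \<and> card (B \<inter> A) \<le> k}"
  let ?N2 = "{B. card B = r \<and> k \<le> card (B \<inter> A)}"
  let ?P = "base_polytope (uniform_matroid r :: 'n set set)"
  let ?P1 = "base_polytope ?N1"
  let ?P2 = "base_polytope ?N2"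
  let ?c = "incidence_vec A"
  have kr: "k \<le> r" using hi card_mono[of Bh "Bh \<inter> A"] by auto
  have m1: "matroid_bases ?N1" by (rule mb1) (use lo in auto)
  have m2: "matroid_bases ?N2"
  proof -
    have "Bh \<in> ?N2" using hi by auto
    then show ?thesis using mb1[of r "-A" "r - k"] N2_eq[OF kr, of A] by auto
  qed
  have sub1: "?P1 \<subseteq> ?P" unfolding base_polytope_def uniform_matroid_def by (intro hull_mono image_mono) auto
  have sub2: "?P2 \<subseteq> ?P" unfolding base_polytope_def uniform_matroid_def by (intro hull_mono image_mono) auto
  have le1: "?P1 \<subseteq> {x. ?c \<bullet> x \<le> real k}" unfolding base_polytope_def
    by (rule hull_minimal) (auto simp: lv_inner convex_halfspace_le)
  have ge2: "?P2 \<subseteq> {x. ?c \<bullet> x \<ge> real k}" unfolding base_polytope_def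
    by (rule hull_minimal) (auto simp: lv_inner convex_halfspace_ge)
  have un: "?P = ?P1 \<union> ?P2"
  proof
    show "?P \<subseteq> ?P1 \<union> ?P2"
    proof
      fix x assume x: "x \<in> ?P"
      show "x \<in> ?P1 \<union> ?P2"
      proof (cases "?c \<bullet> x \<le> real k")
        case True then show ?thesis using P1_lemma[OF x] by blast
      next
        case False then show ?thesis using P2_lemma[OF x _ kr] by auto
      qed
    qed
  qed (use sub1 sub2 in auto)
  have int1: "?P1 \<inter> ?P2 = ?P1 \<inter> {x. ?c \<bullet> x = real k}"
    using le1 ge2 sub1 P2_lemma[OF _ _ kr, of _ A] by fastforce
  have int2: "?P1 \<inter> ?P2 = ?P2 \<inter> {x. ?c \<bullet> x = real k}"
    using le1 ge2 sub2 P1_lemma[of _ r A k] by fastforce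
  have f1: "(?P1 \<inter> ?P2) face_of ?P1" unfolding int1
    by (rule face_of_Int_supporting_hyperplane_le) (use le1 in \<open>auto simp: base_polytope_def convex_convex_hull\<close>)
  have f2: "(?P1 \<inter> ?P2) face_of ?P2" unfolding int2
    by (rule face_of_Int_supporting_hyperplane_ge) (use ge2 in \<open>auto simp: base_polytope_def convex_convex_hull\<close>)
  have "incidence_vec Bh \<in> ?P" unfolding base_polytope_def uniform_matroid_def
    by (rule hull_inc) (use hi in auto)
  moreover have "incidence_vec Bh \<notin> ?P1" using le1 hi by (auto simp: lv_inner)
  moreover have "incidence_vec Bl \<in> ?P" unfolding base_polytope_def uniform_matroid_def
    by (rule hull_inc) (use lo in auto)
  moreover have "incidence_vec Bl \<notin> ?P2" using ge2 lo by (auto simp: lv_inner)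
  ultimately have "?P1 \<noteq> ?P" "?P2 \<noteq> ?P" by auto
  then show ?thesis unfolding hyperplane_split_def using m1 m2 un f1 f2 by auto
qed

definition atoms :: "(real ^ 'n::finite) set \<Rightarrow> (real ^ 'n) set set" where
  "atoms P = {F. F face_of P \<and> F \<noteq> {} \<and> (\<forall>G. G face_of P \<longrightarrow> G \<subseteq> F \<longrightarrow> G = {} \<or> G = F)}"

lemma comb_equiv_atoms:
  assumes "comb_equiv P Q"
  shows "card (atoms P) = card (atoms Q)"
proof -
  obtain f where bij: "bij_betw f {F. F face_of P} {G. G face_of Q}"
    and ord0: "\<forall>F1 F2. F1 face_of P \<longrightarrow> F2 face_of P \<longrightarrow> (F1 \<subseteq> F2 \<longleftrightarrow> f F1 \<subseteq> f F2)"
    using assms unfolding comb_equiv_def by (elim exE conjE)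
  have ord: "\<And>F1 F2. F1 face_of P \<Longrightarrow> F2 face_of P \<Longrightarrow> (F1 \<subseteq> F2 \<longleftrightarrow> f F1 \<subseteq> f F2)"
    using ord0 by simp
  have inj: "\<And>F1 F2. F1 face_of P \<Longrightarrow> F2 face_of P \<Longrightarrow> f F1 = f F2 \<Longrightarrow> F1 = F2"
  proof -
    fix F1 F2 assume "F1 face_of P" "F2 face_of P" "f F1 = f F2"
    then show "F1 = F2" using inj_onD[OF bij_betw_imp_inj_on[OF bij], of F1 F2] by simp
  qed
  have img: "\<And>F. F face_of P \<Longrightarrow> f F face_of Q" using bij_betw_apply[OF bij] by simp
  have surj: "\<And>H. H face_of Q \<Longrightarrow> \<exists>F. F face_of P \<and> H = f F"
  proof -
    fix H assume "H face_of Q"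
    then have "H \<in> f ` {F. F face_of P}" using bij_betw_imp_surj_on[OF bij] by blast
    then show "\<exists>F. F face_of P \<and> H = f F" by blast
  qed
  have f0: "f {} = {}"
  proof -
    obtain G where G: "G face_of P" "{} = f G" using surj[of "{}"] by auto
    have "f {} \<subseteq> f G" using ord[OF empty_face_of G(1)] by simp
    then show ?thesis using G by auto
  qed
  have "bij_betw f (atoms P) (atoms Q)"
  proof (rule bij_betw_imageI)
    show "inj_on f (atoms P)" using inj unfolding atoms_def inj_on_def by auto
  next
    show "f ` atoms P = atoms Q"
    proof
      show "f ` atoms P \<subseteq> atoms Q"
      proof
        fix H assume "H \<in> f ` atoms P"
        then obtain F where F: "F \<in> atoms P" "H = f F" by auto
        have Ff: "F face_of P" "F \<noteq> {}" "\<And>G. G face_of P \<Longrightarrow> G \<subseteq> F \<Longrightarrow> G = {} \<or> G = F"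
          using F unfolding atoms_def by auto
        have "f F \<noteq> {}" using inj[OF Ff(1) empty_face_of] Ff(2) f0 by auto
        moreover have "H' = {} \<or> H' = f F" if HH: "H' face_of Q" "H' \<subseteq> f F" for H'
        proof -
          obtain G where G: "G face_of P" "H' = f G" using surj[OF HH(1)] by blast
          then have "G \<subseteq> F" using ord[OF G(1) Ff(1)] HH(2) by simp
          then have "G = {} \<or> G = F" using Ff(3)[OF G(1)] by simp
          then show ?thesis using G(2) f0 by auto
        qed
        ultimately show "H \<in> atoms Q" unfolding atoms_def F(2) using img[OF Ff(1)] by blast
      qed
    next
      show "atoms Q \<subseteq> f ` atoms P"
      proof
        fix H assume H: "H \<in> atoms Q"
        then have "H face_of Q" unfolding atoms_def by blast
        then obtain F where F: "F face_of P" "H = f F" using surj by blast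
        have "H \<noteq> {}" using H unfolding atoms_def by blast
        then have "F \<noteq> {}" using F(2) f0 by auto
        moreover have "G = {} \<or> G = F" if "G face_of P" "G \<subseteq> F" for G
        proof -
          have "f G \<subseteq> H" using ord[OF that(1) F(1)] that(2) F(2) by simp
          moreover have "\<forall>G'. G' face_of Q \<longrightarrow> G' \<subseteq> H \<longrightarrow> G' = {} \<or> G' = H" using H unfolding atoms_def by blast
          ultimately have "f G = {} \<or> f G = H" using img[OF that(1)] by blast
          then show ?thesis using inj[OF that(1) empty_face_of] inj[OF that(1) F(1)] F(2) f0 by auto
        qed
        ultimately have "F \<in> atoms P" using F unfolding atoms_def by auto
        then show "H \<in> f ` atoms P" using F by auto
      qed
    qed
  qed
  then show ?thesis by (rule bij_betw_same_card)
qed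

lemma atoms_compact:
  fixes P :: "(real ^ 'n::finite) set"
  assumes "compact P" "convex P"
  shows "atoms P = (\<lambda>v. {v}) ` {v. v extreme_point_of P}"
proof
  show "atoms P \<subseteq> (\<lambda>v. {v}) ` {v. v extreme_point_of P}"
  proof
    fix F assume F: "F \<in> atoms P"
    then have Ff: "F face_of P" "F \<noteq> {}" "\<And>G. G face_of P \<Longrightarrow> G \<subseteq> F \<Longrightarrow> G = {} \<or> G = F"
      unfolding atoms_def by auto
    have "compact F" "convex F" using Ff(1) assms face_of_imp_compact face_of_imp_convex by auto
    then obtain v where v: "v extreme_point_of F" using extreme_point_exists_convex Ff(2) by blast
    then have "{v} face_of F" by (simp add: face_of_singleton)
    then have vP: "{v} face_of P" using Ff(1) face_of_trans by blast
    have "{v} \<subseteq> F" using v extreme_point_of_def by auto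
    then have "F = {v}" using Ff(3)[OF vP] by auto
    then show "F \<in> (\<lambda>v. {v}) ` {v. v extreme_point_of P}" using vP by (auto simp: face_of_singleton)
  qed
  show "(\<lambda>v. {v}) ` {v. v extreme_point_of P} \<subseteq> atoms P"
    unfolding atoms_def by (auto simp: face_of_singleton dest: face_of_imp_subset)
qed

lemma zero_one_extreme:
  fixes T :: "(real ^ 'n::finite) set"
  assumes "incidence_vec B \<in> T" "\<And>x i. x \<in> T \<Longrightarrow> 0 \<le> x$i \<and> x$i \<le> 1"
  shows "incidence_vec B extreme_point_of T"
  unfolding extreme_point_of_def
proof (intro conjI ballI assms(1))
  fix a b assume a: "a \<in> T" and b: "b \<in> T"
  show "incidence_vec B \<notin> open_segment a b"
  proof
    assume "incidence_vec B \<in> open_segment a b"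
    then obtain u where ab: "a \<noteq> b" and u: "0 < u" "u < 1"
      and eq: "incidence_vec B = (1 - u) *\<^sub>R a + u *\<^sub>R b" by (auto simp: in_segment)
    have "a$i = b$i" for i
    proof -
      have ei: "(incidence_vec B)$i = (1-u) * a$i + u * b$i" using eq by simp
      have ra: "0 \<le> a$i" "a$i \<le> 1" and rb: "0 \<le> b$i" "b$i \<le> 1" using assms(2) a b by auto
      show ?thesis
      proof (cases "i \<in> B")
        case True
        then have "(1-u) * (1 - a$i) + u * (1 - b$i) = 0" using ei by (simp add: incidence_vec_def algebra_simps)
        moreover have "(1-u) * (1 - a$i) \<ge> 0" "u * (1 - b$i) \<ge> 0" using u ra rb by auto
        ultimately have "(1-u) * (1 - a$i) = 0" "u * (1 - b$i) = 0" by linarith+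
        then show ?thesis using u by auto
      next
        case False
        then have "(1-u) * a$i + u * b$i = 0" using ei by (simp add: incidence_vec_def)
        moreover have "(1-u) * a$i \<ge> 0" "u * b$i \<ge> 0" using u ra rb by auto
        ultimately have "(1-u) * a$i = 0" "u * b$i = 0" by linarith+
        then show ?thesis using u by auto
      qed
    qed
    then show False using ab by (simp add: vec_eq_iff)
  qed
qed

lemma card_atoms_bp:
  fixes S :: "'n::finite set set"
  shows "card (atoms (base_polytope S)) = card S"
proof -
  let ?T = "convex hull (incidence_vec ` S)"
  have cube: "?T \<subseteq> {x. \<forall>i. 0 \<le> x$i \<and> x$i \<le> 1}"
  proof (rule hull_minimal)
    show "convex {x::real^'n. \<forall>i. 0 \<le> x$i \<and> x$i \<le> 1}"
      unfolding convex_def by (auto intro!: add_nonneg_nonneg mult_nonneg_nonneg convex_bound_le)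
  qed (auto simp: incidence_vec_def)
  have ext: "{v. v extreme_point_of ?T} = incidence_vec ` S"
  proof
    show "{v. v extreme_point_of ?T} \<subseteq> incidence_vec ` S" using extreme_point_of_convex_hull by auto
    show "incidence_vec ` S \<subseteq> {v. v extreme_point_of ?T}"
    proof
      fix v assume "v \<in> incidence_vec ` S"
      then obtain B where "B \<in> S" "v = incidence_vec B" by auto
      then show "v \<in> {v. v extreme_point_of ?T}"
        using zero_one_extreme[of B ?T] cube hull_inc[of v "incidence_vec ` S"] by auto
    qed
  qed
  have "atoms (base_polytope S) = (\<lambda>v. {v}) ` (incidence_vec ` S)"
    unfolding base_polytope_def using atoms_compact[of ?T] ext
    by (simp add: compact_convex_hull finite_imp_compact convex_convex_hull)
  moreover have "inj_on (\<lambda>v. {v}) (incidence_vec ` S)" by (auto simp: inj_on_def)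
  moreover have "inj_on incidence_vec S" using inj_inc by (auto simp: inj_on_def)
  ultimately show ?thesis by (simp add: card_image)
qed

lemma comb_equiv_refl: "comb_equiv P P"
  unfolding comb_equiv_def by (rule exI[of _ id]) auto

lemma count_lemma:
  fixes N :: "'n::finite set set"
  assumes spl: "\<And>i. i \<in> I \<Longrightarrow> hyperplane_split N (N1 i) (N2 i)"
    and inj: "inj_on (\<lambda>i. (card (N1 i), card (N2 i))) I" and fin: "finite I"
  shows "card I \<le> num_splits N"
proof -
  let ?X = "{(M1, M2). hyperplane_split N M1 M2}"
  let ?c = "\<lambda>i. split_equiv `` {(N1 i, N2 i)}"
  have mem: "?c i \<in> ?X // split_equiv" if "i \<in> I" for i
    using spl[OF that] by (intro quotientI) auto
  have "inj_on ?c I"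
  proof (rule inj_onI)
    fix i j assume i: "i \<in> I" and j: "j \<in> I" and eq: "?c i = ?c j"
    have "(N1 j, N2 j) \<in> ?c j" by (simp add: split_equiv_def comb_equiv_refl)
    then have "(N1 j, N2 j) \<in> ?c i" using eq by simp
    then have "comb_equiv (base_polytope (N1 i)) (base_polytope (N1 j))"
      "comb_equiv (base_polytope (N2 i)) (base_polytope (N2 j))"
      by (auto simp: split_equiv_def)
    then have "card (N1 i) = card (N1 j)" "card (N2 i) = card (N2 j)"
      using comb_equiv_atoms card_atoms_bp by metis+
    then show "i = j" using inj i j by (auto dest: inj_onD)
  qed
  then have "card I = card (?c ` I)" by (simp add: card_image)
  also have "\<dots> \<le> card (?X // split_equiv)"
    by (rule card_mono) (use mem in auto)
  finally show ?thesis unfolding num_splits_def .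
qed

lemma strict_mono_inj:
  fixes g :: "nat \<Rightarrow> nat"
  assumes "\<And>a b. a \<in> I \<Longrightarrow> b \<in> I \<Longrightarrow> a < b \<Longrightarrow> g a < g b"
  shows "inj_on (\<lambda>i. (f i, g i)) I"
proof (rule inj_onI)
  fix a b assume "a \<in> I" "b \<in> I" "(f a, g a) = (f b, g b)"
  then show "a = b" using assms[of a b] assms[of b a] by (metis less_irrefl nat_neq_iff prod.inject)
qed

lemma strict_mono_inj2:
  fixes g :: "nat \<Rightarrow> nat"
  assumes "\<And>a b. a \<in> I \<Longrightarrow> b \<in> I \<Longrightarrow> a < b \<Longrightarrow> g a < g b"
  shows "inj_on (\<lambda>i. (g i, f i)) I"
proof (rule inj_onI)
  fix a b assume "a \<in> I" "b \<in> I" "(g a, f a) = (g b, f b)"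
  then show "a = b" using assms[of a b] assms[of b a] by (metis less_irrefl nat_neq_iff prod.inject)
qed

lemma card_compl: "card (- (X::'n::finite set)) = CARD('n) - card X"
  by (simp add: Compl_eq_Diff_UNIV card_Diff_subset)

theorem corollary3:
  fixes r :: nat
  assumes "CARD('n::finite) \<ge> r + 2" and "r + 2 \<ge> 4"
  shows "num_splits (uniform_matroid r :: 'n set set) \<ge> CARD('n) div 2 - 1"
proof -
  define n where "n = CARD('n)"
  obtain h :: "nat \<Rightarrow> 'n" where hb: "bij_betw h {0..<n} UNIV"
    using ex_bij_betw_nat_finite[of "UNIV :: 'n set"] unfolding n_def by auto
  have hinj: "inj_on h {0..<n}" using hb bij_betw_imp_inj_on by blast
  define As where "As a = h ` {0..<a}" for a
  have cardA: "card (As a) = a" if "a \<le> n" for a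
    unfolding As_def using that by (intro card_image[THEN trans] inj_on_subset[OF hinj]) auto
  have monoA: "As a \<subseteq> As b" if "a \<le> b" for a b unfolding As_def using that by auto
  have newA: "h a \<in> As b" "h a \<notin> As a" if "a < b" "b \<le> n" for a b
    unfolding As_def using that inj_onD[OF hinj] by force+
  have r2: "r \<ge> 2" and nr: "n \<ge> r + 2" using assms n_def by auto
  have h01: "h 0 \<noteq> h 1" using inj_onD[OF hinj, of 0 1] nr by auto
  have h01A: "{h 0, h 1} \<subseteq> As a" if "a \<ge> 2" for a unfolding As_def using that by auto
  have sub_exists: "\<exists>B. X \<subseteq> B \<and> B \<subseteq> Y \<and> card B = r" if "card X \<le> r" "r \<le> card Y" "X \<subseteq> Y" for X Y :: "'n set"
    using exists_subset_between[OF that] by auto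
  show ?thesis
  proof (cases "2 * r \<le> n")
    case True
    define I where "I = {2..n-r}"
    let ?N1 = "\<lambda>a. {B :: 'n set. card B = r \<and> card (B \<inter> As a) \<le> 1}"
    let ?N2 = "\<lambda>a. {B :: 'n set. card B = r \<and> 1 \<le> card (B \<inter> As a)}"
    have spl: "hyperplane_split (uniform_matroid r :: 'n set set) (?N1 a) (?N2 a)" if "a \<in> I" for a
    proof -
      have a: "2 \<le> a" "a \<le> n - r" using that I_def by auto
      have "card {h 0, h 1} \<le> r" "r \<le> card (UNIV :: 'n set)" using h01 r2 nr n_def by auto
      then obtain Bh where Bh: "{h 0, h 1} \<subseteq> Bh" "card Bh = r"
        using sub_exists[of "{h 0, h 1}" UNIV] by auto
      have "card (Bh \<inter> As a) \<ge> 2"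
        using card_mono[of "Bh \<inter> As a" "{h 0, h 1}"] Bh h01A[OF a(1)] h01 by auto
      moreover have "r \<le> card (- As a)" using card_compl[of "As a"] cardA[of a] a nr n_def by auto
      then obtain Bl where Bl: "Bl \<subseteq> - As a" "card Bl = r"
        using sub_exists[of "{}" "- As a"] by auto
      moreover have "Bl \<inter> As a = {}" using Bl by auto
      ultimately show ?thesis using split_ok[of Bh r 1 "As a" Bl] Bh by auto
    qed
    have mono: "card (?N2 a) < card (?N2 b)" if "a \<in> I" "b \<in> I" "a < b" for a b
    proof (rule psubset_card_mono)
      show "finite (?N2 b)" by simp
      have ab: "a < b" "b \<le> n - r" using that I_def by auto
      have sub: "?N2 a \<subseteq> ?N2 b"
      proof
        fix B assume "B \<in> ?N2 a"
        moreover have "card (B \<inter> As a) \<le> card (B \<inter> As b)" using monoA[of a b] ab by (intro card_mono) auto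
        ultimately show "B \<in> ?N2 b" by auto
      qed
      moreover have "r \<le> card (- As a)" "card {h a} \<le> r" "{h a} \<subseteq> - As a"
        using card_compl[of "As a"] cardA[of a] ab r2 newA[of a b] n_def nr by auto
      then obtain B where B: "{h a} \<subseteq> B" "B \<subseteq> - As a" "card B = r"
        using sub_exists[of "{h a}" "- As a"] by auto
      moreover have "B \<inter> As a = {}" using B by auto
      moreover have "h a \<in> B \<inter> As b" using B newA[of a b] ab by auto
      then have "card (B \<inter> As b) \<ge> 1" using card_gt_0_iff[of "B \<inter> As b"] by fastforce
      ultimately have "B \<in> ?N2 b" "B \<notin> ?N2 a" by auto
      then show "?N2 a \<subset> ?N2 b" using sub by blast
    qed
    have "card I \<le> num_splits (uniform_matroid r :: 'n set set)"
      by (rule count_lemma[OF spl strict_mono_inj[OF mono]]) (auto simp: I_def)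
    moreover have "card I = n - r - 1" unfolding I_def using nr by auto
    ultimately show ?thesis using True n_def by linarith
  next
    case False
    define I where "I = {2..r}"
    let ?N1 = "\<lambda>a. {B :: 'n set. card B = r \<and> card (B \<inter> As a) \<le> a - 1}"
    let ?N2 = "\<lambda>a. {B :: 'n set. card B = r \<and> a - 1 \<le> card (B \<inter> As a)}"
    have spl: "hyperplane_split (uniform_matroid r :: 'n set set) (?N1 a) (?N2 a)" if "a \<in> I" for a
    proof -
      have a: "2 \<le> a" "a \<le> r" using that I_def by auto
      have "card (As a) \<le> r" "r \<le> card (UNIV :: 'n set)" using cardA[of a] a nr n_def by auto
      then obtain Bh where Bh: "As a \<subseteq> Bh" "card Bh = r"
        using sub_exists[of "As a" UNIV] by auto
      have "card (Bh \<inter> As a) = a" using Bh cardA[of a] a nr by (simp add: Int_absorb1)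
      moreover have "r \<le> card (- {h 0, h 1})" using card_compl[of "{h 0, h 1}"] h01 nr n_def by auto
      then obtain Bl where Bl: "Bl \<subseteq> - {h 0, h 1}" "card Bl = r"
        using sub_exists[of "{}" "- {h 0, h 1}"] by auto
      moreover have "card (Bl \<inter> As a) < a - 1"
      proof -
        have "Bl \<inter> As a \<subseteq> As a - {h 0, h 1}" using Bl by auto
        then have "card (Bl \<inter> As a) \<le> card (As a - {h 0, h 1})" by (intro card_mono) auto
        also have "\<dots> = a - 2" using card_Diff_subset[of "{h 0, h 1}" "As a"] h01A[OF a(1)] cardA[of a] a nr h01 by auto
        finally show ?thesis using a by linarith
      qed
      ultimately show ?thesis using split_ok[of Bh r "a - 1" "As a" Bl] Bh a by auto
    qed
    have mono: "card (?N1 a) < card (?N1 b)" if "a \<in> I" "b \<in> I" "a < b" for a b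
    proof (rule psubset_card_mono)
      show "finite (?N1 b)" by simp
      have ab: "a < b" "b \<le> r" "2 \<le> a" using that I_def by auto
      have dba: "card (As b - As a) = b - a"
        using card_Diff_subset[of "As a" "As b"] monoA[of a b] cardA[of a] cardA[of b] ab nr by auto
      have sub: "?N1 a \<subseteq> ?N1 b"
      proof
        fix B assume B: "B \<in> ?N1 a"
        have "B \<inter> As b \<subseteq> (B \<inter> As a) \<union> (As b - As a)" by auto
        then have "card (B \<inter> As b) \<le> card ((B \<inter> As a) \<union> (As b - As a))" by (intro card_mono) auto
        also have "\<dots> \<le> card (B \<inter> As a) + card (As b - As a)" by (rule card_Un_le)
        finally show "B \<in> ?N1 b" using B dba ab by auto
      qed
      moreover have "r \<le> card (- {h a})" "card (As a) \<le> r" "As a \<subseteq> - {h a}"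
        using card_compl[of "{h a}"] cardA[of a] ab nr newA[of a b] n_def by auto
      then obtain B where B: "As a \<subseteq> B" "B \<subseteq> - {h a}" "card B = r"
        using sub_exists[of "As a" "- {h a}"] by auto
      moreover have "card (B \<inter> As a) = a" using B cardA[of a] ab nr by (simp add: Int_absorb1)
      moreover have "card (B \<inter> As b) \<le> b - 1"
      proof -
        have "B \<inter> As b \<subseteq> As b - {h a}" using B by auto
        then have "card (B \<inter> As b) \<le> card (As b - {h a})" by (intro card_mono) auto
        also have "\<dots> = b - 1" using newA[of a b] ab nr cardA[of b] by (simp add: card_Diff_singleton)
        finally show ?thesis .
      qed
      ultimately have "B \<in> ?N1 b" "B \<notin> ?N1 a" using ab by auto
      then show "?N1 a \<subset> ?N1 b" using sub by blast
    qed
    have "card I \<le> num_splits (uniform_matroid r :: 'n set set)"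
      by (rule count_lemma[OF spl strict_mono_inj2[OF mono]]) (auto simp: I_def)
    moreover have "card I = r - 1" unfolding I_def using r2 by auto
    ultimately show ?thesis using False n_def by linarith
  qed
qed

end
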